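(* Let $H$ be a dephased complex Hadamard matrix of order $6$. If some row of $H$ other than the first (respectively, some column other than the first) contains three entries equal to the same number $x$, then $x\in\{1,-1\}$ and that row (respectively column) is, up to permutation of its entries, equal to $(1,1,1,-1,-1,-1)$.
   Context: A complex Hadamard matrix of order $n$ is an $n\times n$ complex matrix $H$ all of whose entries have modulus $1$ and which satisfies $HH^\ast=nI_n$. It is dephased if all entries of its first row and first column equal $1$. *)

theory Defs
  imports "HOL-Analysis.Analysis" "HOL-Combinatorics.Permutations"
begin

text \<open>An n x n complex matrix is represented as a function H :: nat => nat => complex,
  only the entries H i j with i < n and j < n being relevant (indices 0..n-1).\<close>

definition complex_hadamard :: "nat \<Rightarrow> (nat \<Rightarrow> nat \<Rightarrow> complex) \<Rightarrow> bool" where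
  "complex_hadamard n H \<longleftrightarrow>
     (\<forall>i<n. \<forall>j<n. norm (H i j) = 1) \<and>
     (\<forall>i<n. \<forall>k<n. (\<Sum>j<n. H i j * cnj (H k j)) = (if i = k then of_nat n else 0))"

definition dephased :: "nat \<Rightarrow> (nat \<Rightarrow> nat \<Rightarrow> complex) \<Rightarrow> bool" where
  "dephased n H \<longleftrightarrow> (\<forall>j<n. H 0 j = 1) \<and> (\<forall>i<n. H i 0 = 1)"

definition pm_vec :: "nat \<Rightarrow> complex" where
  "pm_vec j = (if j < 3 then 1 else -1)"

end

theory Submission imports Defs "Jordan_Normal_Form.Determinant" begin

lemma perm_split:
  assumes "P \<subseteq> {..<6::nat}" "card P = 3"
  shows "\<exists>\<sigma>. \<sigma> permutes {..<6} \<and> \<sigma> ` {..<3} = P \<and> \<sigma> ` {3..<6} = {..<6} - P"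
proof -
  have fP: "finite P" using assms(1) finite_subset by blast
  obtain f where f: "bij_betw f {..<3::nat} P"
    using finite_same_card_bij[of "{..<3::nat}" P] fP assms(2) by auto
  have "card ({..<6} - P) = 3" using assms by (simp add: card_Diff_subset fP)
  then obtain g where g: "bij_betw g {3..<6::nat} ({..<6} - P)"
    using finite_same_card_bij[of "{3..<6::nat}" "{..<6} - P"] by auto
  define h where "h j = (if j < 3 then f j else if j < 6 then g j else j)" for j
  have h1: "bij_betw h {..<3} P" using f by (rule bij_betw_cong[THEN iffD1, rotated]) (auto simp: h_def)
  have h2: "bij_betw h {3..<6} ({..<6} - P)" using g by (rule bij_betw_cong[THEN iffD1, rotated]) (auto simp: h_def)
  have "bij_betw h ({..<3} \<union> {3..<6}) (P \<union> ({..<6} - P))"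
    by (rule bij_betw_combine[OF h1 h2]) auto
  moreover have "{..<3} \<union> {3..<6::nat} = {..<6}" by auto
  moreover have "P \<union> ({..<6} - P) = {..<6}" using assms(1) by auto
  ultimately have "bij_betw h {..<6} {..<6}" by simp
  then have "h permutes {..<6}" by (rule bij_imp_permutes) (auto simp: h_def)
  then show ?thesis using h1 h2 by (auto simp: bij_betw_def)
qed

lemma unit_re1: fixes w :: complex assumes "norm w = 1" "Re w = 1" shows "w = 1"
proof -
  have "(Re w)^2 + (Im w)^2 = 1" using assms(1) by (simp add: cmod_def)
  then have "Im w = 0" using assms(2) by simp
  then show ?thesis using assms(2) complex_eq_iff by auto
qed

lemma vec_lemma:
  fixes v :: "nat \<Rightarrow> complex"
  assumes unit: "\<forall>j<6. norm (v j) = 1" and sum0: "(\<Sum>j<6. v j) = 0" and v0: "v 0 = 1"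
    and J: "j1 < 6" "j2 < 6" "j3 < 6" "j1 \<noteq> j2" "j1 \<noteq> j3" "j2 \<noteq> j3"
    and x: "v j1 = x" "v j2 = x" "v j3 = x"
  shows "x \<in> {1, -1} \<and> (\<exists>\<sigma>. \<sigma> permutes {..<6} \<and> (\<forall>j<6. v (\<sigma> j) = pm_vec j))"
proof -
  define J where "J = {j1, j2, j3}"
  define K where "K = {..<6::nat} - J"
  have JS: "J \<subseteq> {..<6}" using J by (auto simp: J_def)
  have cJ: "card J = 3" using J by (simp add: J_def)
  have nx: "norm x = 1" using unit J x by auto
  have sJ: "(\<Sum>j\<in>J. v j) = 3 * x" using J x by (simp add: J_def)
  have "(\<Sum>j<6. v j) = (\<Sum>j\<in>J. v j) + (\<Sum>j\<in>K. v j)"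
    unfolding K_def using JS by (metis finite_lessThan sum.subset_diff add.commute)
  then have sK: "(\<Sum>j\<in>K. v j) = - 3 * x" using sum0 sJ by (simp add: algebra_simps eq_neg_iff_add_eq_0)
  have cK: "card K = 3" using JS cJ by (simp add: K_def card_Diff_subset finite_subset)
  have xx: "x * cnj x = 1" using nx by (metis complex_norm_square mult.commute norm_one power_one of_real_1)
  define w where "w k = v k * cnj (- x)" for k
  have nw: "k \<in> K \<Longrightarrow> norm (w k) = 1" for k using unit nx by (auto simp: K_def w_def norm_mult)
  have "(\<Sum>k\<in>K. w k) = (- 3 * x) * cnj (-x)" unfolding w_def sum_distrib_right[symmetric] sK ..
  also have "\<dots> = 3" using xx by simp
  finally have "Re (\<Sum>k\<in>K. w k) = 3" by simp
  then have "(\<Sum>k\<in>K. Re (w k)) = 3" by (simp add: Re_sum)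
  then have "(\<Sum>k\<in>K. 1 - Re (w k)) = 0" using cK by (simp add: sum_subtractf)
  moreover have "\<forall>k\<in>K. 0 \<le> 1 - Re (w k)" using nw complex_Re_le_cmod by (metis diff_ge_0_iff_ge)
  ultimately have "\<forall>k\<in>K. 1 - Re (w k) = 0" using sum_nonneg_eq_0_iff[of K "\<lambda>k. 1 - Re (w k)"] by (simp add: K_def)
  then have "\<forall>k\<in>K. w k = 1" using nw unit_re1 by auto
  then have vK: "\<forall>k\<in>K. v k = - x"
  proof (intro ballI)
    fix k assume "\<forall>k\<in>K. w k = 1" "k \<in> K"
    then have "v k * cnj (-x) * (-x) = -x" by (simp add: w_def)
    then have "v k * (x * cnj x) = -x" by (simp add: algebra_simps)
    then show "v k = -x" using xx by simp
  qed
  have vJ: "\<forall>j\<in>J. v j = x" using x by (auto simp: J_def)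
  show ?thesis
  proof (cases "0 \<in> J")
    case True
    then have x1: "x = 1" using vJ v0 by auto
    obtain \<sigma> where s: "\<sigma> permutes {..<6}" "\<sigma> ` {..<3} = J" "\<sigma> ` {3..<6} = K"
      using perm_split[OF JS cJ] K_def by auto
    have "\<forall>j<6. v (\<sigma> j) = pm_vec j"
    proof (intro allI impI)
      fix j :: nat assume "j < 6"
      show "v (\<sigma> j) = pm_vec j"
      proof (cases "j < 3")
        case True then have "\<sigma> j \<in> J" using s by auto
        then show ?thesis using vJ x1 True by (simp add: pm_vec_def)
      next
        case False then have "\<sigma> j \<in> K" using s \<open>j<6\<close> by auto
        then show ?thesis using vK x1 False by (simp add: pm_vec_def)
      qed
    qed
    then show ?thesis using x1 s by auto
  next
    case False
    then have "0 \<in> K" by (simp add: K_def)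
    then have x1: "x = -1" using vK v0 by (metis minus_equation_iff)
    have KS: "K \<subseteq> {..<6}" by (auto simp: K_def)
    obtain \<sigma> where s: "\<sigma> permutes {..<6}" "\<sigma> ` {..<3} = K" "\<sigma> ` {3..<6} = {..<6} - K"
      using perm_split[OF KS cK] by auto
    have KJ: "{..<6} - K = J" using JS by (auto simp: K_def)
    have "\<forall>j<6. v (\<sigma> j) = pm_vec j"
    proof (intro allI impI)
      fix j :: nat assume "j < 6"
      show "v (\<sigma> j) = pm_vec j"
      proof (cases "j < 3")
        case True then have "\<sigma> j \<in> K" using s by auto
        then show ?thesis using vK x1 True by (simp add: pm_vec_def)
      next
        case False then have "\<sigma> j \<in> J" using s KJ \<open>j<6\<close> by auto
        then show ?thesis using vJ x1 False by (simp add: pm_vec_def)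
      qed
    qed
    then show ?thesis using x1 s by auto
  qed
qed

lemma col_orth:
  fixes H :: "nat \<Rightarrow> nat \<Rightarrow> complex"
  assumes "complex_hadamard 6 H"
  shows "\<forall>j<6. \<forall>j'<6. (\<Sum>i<6. cnj (H i j) * H i j') = (if j = j' then 6 else 0)"
proof -
  define A where "A = Matrix.mat 6 6 (\<lambda>(i,j). H i j)"
  define B where "B = Matrix.mat 6 6 (\<lambda>(i,j). cnj (H j i) / 6)"
  have orth: "\<forall>i<6. \<forall>k<6. (\<Sum>j<6. H i j * cnj (H k j)) = (if i = k then 6 else 0)"
    using assms by (simp add: complex_hadamard_def)
  have AB: "A * B = 1\<^sub>m 6"
  proof (rule eq_matI)
    fix i k assume ik: "i < dim_row (1\<^sub>m 6)" "k < dim_col (1\<^sub>m (6::nat))"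
    have "(A * B) $$ (i,k) = (\<Sum>j<6. H i j * cnj (H k j)) / 6"
      using ik by (simp add: A_def B_def scalar_prod_def sum_divide_distrib atLeast0LessThan)
    also have "\<dots> = 1\<^sub>m 6 $$ (i,k)" using ik orth by auto
    finally show "(A * B) $$ (i,k) = 1\<^sub>m 6 $$ (i,k)" .
  qed (auto simp: A_def B_def)
  have BA: "B * A = 1\<^sub>m 6"
    by (rule mat_mult_left_right_inverse[OF _ _ AB]) (auto simp: A_def B_def)
  show ?thesis
  proof (intro allI impI)
    fix j j' :: nat assume jj: "j < 6" "j' < 6"
    have "(B * A) $$ (j,j') = (\<Sum>i<6. cnj (H i j) * H i j') / 6"
      using jj by (simp add: A_def B_def scalar_prod_def sum_divide_distrib atLeast0LessThan)
    then have "(\<Sum>i<6. cnj (H i j) * H i j') = (1\<^sub>m 6 $$ (j,j')) * 6" using BA by simp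
    then show "(\<Sum>i<6. cnj (H i j) * H i j') = (if j = j' then 6 else 0)" using jj by simp
  qed
qed

theorem lemma2p22:
  fixes H :: "nat \<Rightarrow> nat \<Rightarrow> complex"
  assumes "complex_hadamard 6 H" and "dephased 6 H"
  shows "(\<forall>i x. 0 < i \<and> i < 6 \<and>
            (\<exists>j1 j2 j3. j1 < 6 \<and> j2 < 6 \<and> j3 < 6 \<and> j1 \<noteq> j2 \<and> j1 \<noteq> j3 \<and> j2 \<noteq> j3 \<and>
               H i j1 = x \<and> H i j2 = x \<and> H i j3 = x)
          \<longrightarrow> x \<in> {1, -1} \<and> (\<exists>\<sigma>. \<sigma> permutes {..<6} \<and> (\<forall>j<6. H i (\<sigma> j) = pm_vec j)))
       \<and> (\<forall>j x. 0 < j \<and> j < 6 \<and>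
            (\<exists>i1 i2 i3. i1 < 6 \<and> i2 < 6 \<and> i3 < 6 \<and> i1 \<noteq> i2 \<and> i1 \<noteq> i3 \<and> i2 \<noteq> i3 \<and>
               H i1 j = x \<and> H i2 j = x \<and> H i3 j = x)
          \<longrightarrow> x \<in> {1, -1} \<and> (\<exists>\<sigma>. \<sigma> permutes {..<6} \<and> (\<forall>i<6. H (\<sigma> i) j = pm_vec i)))"
proof (rule conjI; intro allI impI)
  have had: "\<forall>i<6. \<forall>j<6. norm (H i j) = 1"
    "\<forall>i<6. \<forall>k<6. (\<Sum>j<6. H i j * cnj (H k j)) = (if i = k then of_nat 6 else 0)"
    using assms(1) by (auto simp: complex_hadamard_def)
  have dep: "\<forall>j<6. H 0 j = 1" "\<forall>i<6. H i 0 = 1" using assms(2) by (auto simp: dephased_def)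
  fix i x
  assume a: "0 < i \<and> i < 6 \<and> (\<exists>j1 j2 j3. j1 < 6 \<and> j2 < 6 \<and> j3 < 6 \<and> j1 \<noteq> j2 \<and> j1 \<noteq> j3 \<and> j2 \<noteq> j3 \<and>
               H i j1 = x \<and> H i j2 = x \<and> H i j3 = x)"
  then obtain j1 j2 j3 where jj: "j1 < 6" "j2 < 6" "j3 < 6" "j1 \<noteq> j2" "j1 \<noteq> j3" "j2 \<noteq> j3"
    "H i j1 = x" "H i j2 = x" "H i j3 = x" by blast
  have "(\<Sum>j<6. H i j * cnj (H 0 j)) = 0" using had(2) a by auto
  then have s0: "(\<Sum>j<6. H i j) = 0" using dep(1) by simp
  show "x \<in> {1, -1} \<and> (\<exists>\<sigma>. \<sigma> permutes {..<6} \<and> (\<forall>j<6. H i (\<sigma> j) = pm_vec j))"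
    using vec_lemma[of "H i" j1 j2 j3 x] had dep a jj s0 by auto
next
  have had: "\<forall>i<6. \<forall>j<6. norm (H i j) = 1"
    using assms(1) by (auto simp: complex_hadamard_def)
  have co: "\<forall>j<6. \<forall>j'<6. (\<Sum>i<6. cnj (H i j) * H i j') = (if j = j' then 6 else 0)"
    using col_orth[OF assms(1)] .
  have dep: "\<forall>j<6. H 0 j = 1" "\<forall>i<6. H i 0 = 1" using assms(2) by (auto simp: dephased_def)
  fix j x
  assume a: "0 < j \<and> j < 6 \<and> (\<exists>i1 i2 i3. i1 < 6 \<and> i2 < 6 \<and> i3 < 6 \<and> i1 \<noteq> i2 \<and> i1 \<noteq> i3 \<and> i2 \<noteq> i3 \<and>
               H i1 j = x \<and> H i2 j = x \<and> H i3 j = x)"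
  then obtain i1 i2 i3 where ii: "i1 < 6" "i2 < 6" "i3 < 6" "i1 \<noteq> i2" "i1 \<noteq> i3" "i2 \<noteq> i3"
    "H i1 j = x" "H i2 j = x" "H i3 j = x" by blast
  have "(\<Sum>i<6. cnj (H i 0) * H i j) = 0" using co a by auto
  then have s0: "(\<Sum>i<6. H i j) = 0" using dep(2) by simp
  show "x \<in> {1, -1} \<and> (\<exists>\<sigma>. \<sigma> permutes {..<6} \<and> (\<forall>i<6. H (\<sigma> i) j = pm_vec i))"
    using vec_lemma[of "\<lambda>i. H i j" i1 i2 i3 x] had dep a ii s0 by auto
qed

end
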